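(* For every positive integer $n$, the poset $\widetilde\Pi(\mathbb{Z}_n)$ is isomorphic (as a poset, hence as a lattice) to the subgroup lattice $\mathcal{L}(\mathbb{Z}_n)$; in particular, $\widetilde\Pi(\mathbb{Z}_n)$ is a lattice.
   Context: For a finite group $G$ and a subgroup $H\le G$, let $\pi_e(H)=\{o(x)\mid x\in H\}$. Let $\mathcal{L}(G)$ be the lattice of subgroups of $G$ ordered by inclusion; define $H_1\equiv H_2$ iff $\pi_e(H_1)=\pi_e(H_2)$, with class $[H]$. The poset $\widetilde\Pi(G)$ is $\mathcal{L}(G)/\!\equiv$ ordered by $[H_1]\lesssim[H_2]$ iff $\pi_e(H_1)\subseteq\pi_e(H_2)$. $\mathbb{Z}_n$ is the cyclic group of order $n$. *)

theory Defs
  imports "HOL-Algebra.Algebra"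
begin

text \<open>pi_e(H): the set of element orders of H (orders taken in G; for a subgroup
  these coincide with the orders in H).\<close>
definition pi_e :: "('a, 'b) monoid_scheme \<Rightarrow> 'a set \<Rightarrow> nat set" where
  "pi_e G H = {group.ord G x | x. x \<in> H}"

definition spec_class :: "('a, 'b) monoid_scheme \<Rightarrow> 'a set \<Rightarrow> 'a set set" where
  "spec_class G H = {K. subgroup K G \<and> pi_e G K = pi_e G H}"

definition Pi_tilde :: "('a, 'b) monoid_scheme \<Rightarrow> 'a set set gorder" where
  "Pi_tilde G = \<lparr> carrier = {spec_class G H | H. subgroup H G},
                  eq = (=),
                  le = (\<lambda>A B. \<exists>H K. subgroup H G \<and> subgroup K G \<and>
                          A = spec_class G H \<and> B = spec_class G K \<and>
                          pi_e G H \<subseteq> pi_e G K) \<rparr>"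

definition subgroup_lattice :: "('a, 'b) monoid_scheme \<Rightarrow> 'a set gorder" where
  "subgroup_lattice G = \<lparr> carrier = {H. subgroup H G}, eq = (=), le = (\<subseteq>) \<rparr>"

definition poset_iso :: "('a, 'c) gorder_scheme \<Rightarrow> ('b, 'd) gorder_scheme \<Rightarrow> bool" where
  "poset_iso A B \<longleftrightarrow> (\<exists>f. bij_betw f (carrier A) (carrier B) \<and>
      (\<forall>x\<in>carrier A. \<forall>y\<in>carrier A. x \<sqsubseteq>\<^bsub>A\<^esub> y \<longleftrightarrow> f x \<sqsubseteq>\<^bsub>B\<^esub> f y))"

end

theory Submission
  imports Defs
begin

lemma lattice_transfer:
  fixes L :: "('a,'c) gorder_scheme" and M :: "('b,'d) gorder_scheme"
  assumes lat: "lattice L" and eL: "eq L = (=)" and eM: "eq M = (=)"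
    and bij: "bij_betw f (carrier M) (carrier L)"
    and mono: "\<forall>x\<in>carrier M. \<forall>y\<in>carrier M. le M x y \<longleftrightarrow> le L (f x) (f y)"
  shows "lattice M"
proof -
  interpret L: lattice L by (rule lat)
  have inj: "inj_on f (carrier M)" and img: "f ` carrier M = carrier L"
    using bij by (auto simp: bij_betw_def)
  have fc: "f x \<in> carrier L" if "x \<in> carrier M" for x using that img by blast
  have surj: "\<exists>x\<in>carrier M. f x = z" if "z \<in> carrier L" for z
  proof -
    have "z \<in> f ` carrier M" using that img by simp
    then obtain x where "z = f x" "x \<in> carrier M" by (rule imageE)
    then show ?thesis by blast
  qed
  have po: "partial_order M"
  proof
    show "x .=\<^bsub>M\<^esub> x" if "x \<in> carrier M" for x using eM by simp
    show "y .=\<^bsub>M\<^esub> x" if "x .=\<^bsub>M\<^esub> y" for x y using that eM by simp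
    show "x .=\<^bsub>M\<^esub> z" if "x .=\<^bsub>M\<^esub> y" "y .=\<^bsub>M\<^esub> z" for x y z using that eM by simp
    show "x \<sqsubseteq>\<^bsub>M\<^esub> x" if "x \<in> carrier M" for x using that mono fc by auto
    show "x .=\<^bsub>M\<^esub> y" if "x \<sqsubseteq>\<^bsub>M\<^esub> y" "y \<sqsubseteq>\<^bsub>M\<^esub> x" "x \<in> carrier M" "y \<in> carrier M" for x y
    proof -
      have "f x = f y" using that mono fc L.le_antisym by blast
      then show ?thesis using inj that eM by (auto dest: inj_onD)
    qed
    show "x \<sqsubseteq>\<^bsub>M\<^esub> z" if "x \<sqsubseteq>\<^bsub>M\<^esub> y" "y \<sqsubseteq>\<^bsub>M\<^esub> z" "x \<in> carrier M" "y \<in> carrier M" "z \<in> carrier M" for x y z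
      using that mono fc L.le_trans by meson
    show "x \<sqsubseteq>\<^bsub>M\<^esub> z \<longleftrightarrow> y \<sqsubseteq>\<^bsub>M\<^esub> w" if "x .=\<^bsub>M\<^esub> y" "z .=\<^bsub>M\<^esub> w" for x y z w
      using that eM by simp
    show "(.=\<^bsub>M\<^esub>) = (=)" using eM by simp
  qed
  have sup: "\<exists>s. least M s (Upper M {x, y})" if xy: "x \<in> carrier M" "y \<in> carrier M" for x y
  proof -
    obtain t where t: "least L t (Upper L {f x, f y})"
      using L.sup_of_two_exists fc xy by blast
    then have tc: "t \<in> carrier L" by (auto simp: least_def Upper_def)
    then obtain s where s: "s \<in> carrier M" "f s = t" using surj by blast
        have tu: "t \<in> Upper L {f x, f y}" "\<And>z. z \<in> Upper L {f x, f y} \<Longrightarrow> t \<sqsubseteq>\<^bsub>L\<^esub> z"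
      using t by (auto simp: least_def)
    have s1: "s \<in> Upper M {x, y}"
      using tu(1) s xy mono fc by (auto simp: Upper_def)
    have s2: "s \<sqsubseteq>\<^bsub>M\<^esub> z" if z: "z \<in> Upper M {x, y}" for z
    proof -
      have zc: "z \<in> carrier M" using z by (auto simp: Upper_def)
      have "f z \<in> Upper L {f x, f y}" using z zc xy mono fc by (auto simp: Upper_def)
      then have "t \<sqsubseteq>\<^bsub>L\<^esub> f z" by (rule tu(2))
      then show ?thesis using s zc mono by auto
    qed
    have "least M s (Upper M {x, y})"
      unfolding least_def using s1 s2 by blast
    then show ?thesis by blast
  qed
  have inf: "\<exists>s. greatest M s (Lower M {x, y})" if xy: "x \<in> carrier M" "y \<in> carrier M" for x y
  proof -
    obtain t where t: "greatest L t (Lower L {f x, f y})"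
      using L.inf_of_two_exists fc xy by blast
    then have tc: "t \<in> carrier L" by (auto simp: greatest_def Lower_def)
    then obtain s where s: "s \<in> carrier M" "f s = t" using surj by blast
        have tu: "t \<in> Lower L {f x, f y}" "\<And>z. z \<in> Lower L {f x, f y} \<Longrightarrow> z \<sqsubseteq>\<^bsub>L\<^esub> t"
      using t by (auto simp: greatest_def)
    have s1: "s \<in> Lower M {x, y}"
      using tu(1) s xy mono fc by (auto simp: Lower_def)
    have s2: "z \<sqsubseteq>\<^bsub>M\<^esub> s" if z: "z \<in> Lower M {x, y}" for z
    proof -
      have zc: "z \<in> carrier M" using z by (auto simp: Lower_def)
      have "f z \<in> Lower L {f x, f y}" using z zc xy mono fc by (auto simp: Lower_def)
      then have "f z \<sqsubseteq>\<^bsub>L\<^esub> t" by (rule tu(2))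
      then show ?thesis using s zc mono by auto
    qed
    have "greatest M s (Lower M {x, y})"
      unfolding greatest_def using s1 s2 by blast
    then show ?thesis by blast
  qed
  show ?thesis
    using po sup inf
    by (simp add: lattice_def upper_semilattice_def lower_semilattice_def
        upper_semilattice_axioms_def lower_semilattice_axioms_def)
qed

lemma zn_elem_key:
  fixes n :: nat
  defines "G \<equiv> integer_mod_group n"
  assumes n: "n > 0" and x: "x \<in> carrier G" and y: "y \<in> carrier G"
    and o: "group.ord G x = group.ord G y"
  shows "\<exists>k::nat. x = y [^]\<^bsub>G\<^esub> k"
proof -
  interpret group G unfolding G_def by simp
  define N where "N = int n"
  have N: "N > 0" using n N_def by simp
  have xr: "0 \<le> x" "x < N" and yr: "0 \<le> y" "y < N"
    using x y n by (auto simp: G_def carrier_integer_mod_group N_def)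
  define g where "g = gcd y N"
  have g: "g > 0" using N g_def by simp
  have gN: "g dvd N" and gy: "g dvd y" unfolding g_def by auto
  define m where "m = nat (N div g)"
  have mi: "int m = N div g" using N g m_def by (simp add: div_int_pos_iff)
  have Ng: "N = g * (N div g)" using gN by simp
  have "int m * y = N * (y div g)"
  proof -
    obtain b where b: "y = g * b" using gy by blast
    obtain c where c: "N = g * c" using gN by blast
    have "N div g = c" "y div g = b" using b c g by simp_all
    then show ?thesis using mi b c by (simp add: ac_simps)
  qed
  then have "y [^]\<^bsub>G\<^esub> m = \<one>\<^bsub>G\<^esub>" by (simp add: G_def N_def)
  then have "ord y dvd m" using pow_eq_id y by blast
  then have "ord x dvd m" using o by simp
  then have "x [^]\<^bsub>G\<^esub> m = \<one>\<^bsub>G\<^esub>" using pow_eq_id x by blast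
  then have "(int m * x) mod N = 0" by (simp add: G_def N_def)
  then have "N dvd (N div g) * x" using mi by (simp add: dvd_eq_mod_eq_0)
  then have "(N div g) * g dvd (N div g) * x" using Ng by (simp add: mult.commute)
  moreover have "N div g \<noteq> 0" using Ng N by auto
  ultimately have gx: "g dvd x" using dvd_times_left_cancel_iff by blast
  obtain u v where uv: "u * y + v * N = g" using bezout_int[of y N] g_def by blast
  obtain a where a: "x = g * a" using gx by blast
  define k where "k = nat ((u * a) mod N)"
  have ki: "int k = (u * a) mod N" using N k_def by simp
  have "y [^]\<^bsub>G\<^esub> k = (int k * y) mod N" by (simp add: G_def N_def)
  also have "\<dots> = (u * a * y) mod N" using ki by (simp add: mod_mult_left_eq)
  also have "\<dots> = (x - v * a * N) mod N"
  proof -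
    have uy: "u * y = g - v * N" using uv by (simp add: eq_diff_eq)
    have "u * a * y = a * (u * y)" by (simp add: ac_simps)
    also have "\<dots> = x - v * a * N" using uy a by (simp add: right_diff_distrib ac_simps)
    finally show ?thesis by simp
  qed
  also have "\<dots> = x mod N"
  proof -
    have "x - v * a * N = x + (- (v * a)) * N" by simp
    then show ?thesis by (simp only: mod_mult_self1)
  qed
  also have "\<dots> = x" using xr by simp
  finally have "x = y [^]\<^bsub>G\<^esub> k" by (rule sym)
  then show ?thesis by blast
qed

lemma zn_pi_e_sub:
  fixes n :: nat
  defines "G \<equiv> integer_mod_group n"
  assumes n: "n > 0" and H: "subgroup H G" and K: "subgroup K G"
  shows "pi_e G H \<subseteq> pi_e G K \<longleftrightarrow> H \<subseteq> K"
proof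
  interpret group G unfolding G_def by simp
  assume sub: "pi_e G H \<subseteq> pi_e G K"
  show "H \<subseteq> K"
  proof
    fix x assume xH: "x \<in> H"
    then have "ord x \<in> pi_e G K" using sub by (auto simp: pi_e_def)
    then obtain y where yK: "y \<in> K" and o: "ord y = ord x" by (auto simp: pi_e_def)
    have xc: "x \<in> carrier G" using xH H subgroup.subset by blast
    have yc: "y \<in> carrier G" using yK K subgroup.subset by blast
    obtain k :: nat where "x = y [^]\<^bsub>G\<^esub> k"
      using zn_elem_key[OF n, of x y] xc yc o G_def by metis
    also have "\<dots> = y [^]\<^bsub>G\<^esub> (int k)" by (simp add: int_pow_int)
    also have "\<dots> \<in> K" by (rule subgroup_int_pow_closed[OF K yK])
    finally show "x \<in> K" .
  qed
next
  assume "H \<subseteq> K"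
  then show "pi_e G H \<subseteq> pi_e G K" by (auto simp: pi_e_def)
qed

lemma zn_spec_class:
  fixes n :: nat
  defines "G \<equiv> integer_mod_group n"
  assumes n: "n > 0" and H: "subgroup H G"
  shows "spec_class G H = {H}"
proof -
  have "K = H" if "subgroup K G" "pi_e G K = pi_e G H" for K
    using zn_pi_e_sub[OF n, of K H] zn_pi_e_sub[OF n, of H K] that H G_def by auto
  then show ?thesis using H by (auto simp: spec_class_def)
qed

theorem theorem2p3:
  fixes n :: nat
  assumes "n > 0"
  shows "poset_iso (Pi_tilde (integer_mod_group n)) (subgroup_lattice (integer_mod_group n))
         \<and> lattice (Pi_tilde (integer_mod_group n))"
proof -
  define G where "G = integer_mod_group n"
  have n: "n > 0" by (rule assms)
  interpret group G unfolding G_def by simp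
  have sc: "spec_class G H = {H}" if "subgroup H G" for H
    using zn_spec_class[OF n, of H] that G_def by simp
  have carr: "carrier (Pi_tilde G) = (\<lambda>H. {H}) ` {H. subgroup H G}"
    using sc by (auto simp: Pi_tilde_def)
  have le: "le (Pi_tilde G) {H} {K} \<longleftrightarrow> H \<subseteq> K" if "subgroup H G" "subgroup K G" for H K
  proof
    assume "le (Pi_tilde G) {H} {K}"
    then obtain H' K' where "subgroup H' G" "subgroup K' G" "{H} = spec_class G H'"
      "{K} = spec_class G K'" "pi_e G H' \<subseteq> pi_e G K'" by (auto simp: Pi_tilde_def)
    then show "H \<subseteq> K" using sc zn_pi_e_sub[OF n, of H' K'] G_def by auto
  next
    assume "H \<subseteq> K"
    then have "pi_e G H \<subseteq> pi_e G K" by (auto simp: pi_e_def)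
    moreover have "{H} = spec_class G H" "{K} = spec_class G K" using sc that by auto
    ultimately have "\<exists>H' K'. subgroup H' G \<and> subgroup K' G \<and> {H} = spec_class G H' \<and>
        {K} = spec_class G K' \<and> pi_e G H' \<subseteq> pi_e G K'"
      using that by blast
    then show "le (Pi_tilde G) {H} {K}" by (simp add: Pi_tilde_def)
  qed
  define f where "f = (\<lambda>A :: int set set. \<Union>A)"
  have bij: "bij_betw f (carrier (Pi_tilde G)) (carrier (subgroup_lattice G))"
    unfolding bij_betw_def carr f_def
    by (auto simp: inj_on_def subgroup_lattice_def image_iff)
  have mono: "\<forall>x\<in>carrier (Pi_tilde G). \<forall>y\<in>carrier (Pi_tilde G).
      le (Pi_tilde G) x y \<longleftrightarrow> le (subgroup_lattice G) (f x) (f y)"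
    using le unfolding carr f_def by (auto simp: subgroup_lattice_def)
  have iso: "poset_iso (Pi_tilde G) (subgroup_lattice G)"
    unfolding poset_iso_def using bij mono by blast
  have latS: "lattice (subgroup_lattice G)"
    unfolding subgroup_lattice_def using subgroups_complete_lattice by simp
  have eqS: "eq (subgroup_lattice G) = (=)" by (simp add: subgroup_lattice_def)
  have eqP: "eq (Pi_tilde G) = (=)" by (simp add: Pi_tilde_def)
  have "lattice (Pi_tilde G)" by (rule lattice_transfer[OF latS eqS eqP bij mono])
  then show ?thesis using iso G_def by simp
qed

end
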